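(* Let $m,n$ be positive integers such that $n$ reduces to $m$. Let $a$ be the smallest integer with $2^am\ge n$. Then $|\mathcal{M}_x(n)|\le|\mathcal{M}_x(2^am)|$ for all $x\in\mathbb{R}$.
   Context: For a positive integer $n$, $\mathcal{D}(n)$ is the set of positive divisors of $n$, and $\lambda(n)$ is the least prime factor of $n$ if $n\ge2$, with $\lambda(1)=1$. For positive integers $m,n$, a function $f:\mathcal{D}(n)\to\mathcal{D}(m)$ is called reducing if for all $d,d'\in\mathcal{D}(n)$: (a) $f(d)\le d$; (b) $\frac{m/f(d)}{n/d}\le\min\{1,\ \lambda(m/f(d))/\lambda(n/d)\}$; (c) if $f(d)=2^if(d')$ for some $i\in\mathbb{Z}$, then $d=2^jd'$ for some $j\in\mathbb{Z}$. We say $n$ reduces to $m$ if a reducing function $\mathcal{D}(n)\to\mathcal{D}(m)$ exists. For $x\in\mathbb{R}$, a positive divisor $d$ of $n$ is maximal with respect to $x$ if $d\le x$ and there is no other positive divisor $d'$ of $n$ with $d'\le x$ and $d\mid d'$; $\mathcal{M}_x(n)$ denotes the set of such divisors. *)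

theory Defs
  imports "HOL-Analysis.Analysis" "HOL-Computational_Algebra.Primes"
begin

definition divisors_set :: "nat \<Rightarrow> nat set" where
  "divisors_set n = {d. 0 < d \<and> d dvd n}"

definition least_prime_factor :: "nat \<Rightarrow> nat" where
  "least_prime_factor n = (if n \<ge> 2 then Min (prime_factors n) else 1)"

definition reducing :: "nat \<Rightarrow> nat \<Rightarrow> (nat \<Rightarrow> nat) \<Rightarrow> bool" where
  "reducing m n f \<longleftrightarrow>
     (\<forall>d\<in>divisors_set n. f d \<in> divisors_set m) \<and>
     (\<forall>d\<in>divisors_set n. f d \<le> d) \<and>
     (\<forall>d\<in>divisors_set n.
        (real (m div f d) / real (n div d))
          \<le> min 1 (real (least_prime_factor (m div f d)) / real (least_prime_factor (n div d)))) \<and>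
     (\<forall>d\<in>divisors_set n. \<forall>d'\<in>divisors_set n.
        (\<exists>i::int. real (f d) = 2 powi i * real (f d')) \<longrightarrow>
        (\<exists>j::int. real d = 2 powi j * real d'))"

definition reduces_to :: "nat \<Rightarrow> nat \<Rightarrow> bool" where
  "reduces_to n m \<longleftrightarrow> (\<exists>f. reducing m n f)"

definition maximal_divisors :: "real \<Rightarrow> nat \<Rightarrow> nat set" where
  "maximal_divisors x n =
     {d\<in>divisors_set n. real d \<le> x \<and>
        \<not> (\<exists>d'\<in>divisors_set n. d' \<noteq> d \<and> real d' \<le> x \<and> d dvd d')}"

end

theory Submission
  imports Defs
begin

lemma lpf_prime:
  assumes "k \<ge> 2"
  shows "prime (least_prime_factor k) \<and> least_prime_factor k dvd k"
proof -
  obtain p where p: "prime p" "p dvd k" using assms prime_factor_nat[of k] by auto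
  have "p \<in> prime_factors k" using p assms by (simp add: in_prime_factors_iff)
  then have ne: "prime_factors k \<noteq> {}" by blast
  have "Min (prime_factors k) \<in> prime_factors k" using ne by (intro Min_in) auto
  then show ?thesis using assms unfolding least_prime_factor_def by auto
qed

lemma lpf_le:
  assumes "prime p" "p dvd k" "k > 0"
  shows "least_prime_factor k \<le> p"
proof (cases "k \<ge> 2")
  case True
  then have "p \<in> prime_factors k" using assms by (auto simp: in_prime_factors_iff)
  then show ?thesis using True unfolding least_prime_factor_def by auto
next
  case False
  then have "k = 1" using assms by auto
  then show ?thesis using assms by auto
qed

lemma lpf_pos: "least_prime_factor k \<ge> 1"
proof (cases "k \<ge> 2")
  case True
  then show ?thesis using lpf_prime[OF True] by (metis One_nat_def Suc_leI prime_gt_0_nat)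
next
  case False
  then show ?thesis unfolding least_prime_factor_def by auto
qed

lemma finite_divs: "n > 0 \<Longrightarrow> finite (divisors_set n)"
  unfolding divisors_set_def
  by (rule finite_subset[of _ "{..n}"]) (auto dest: dvd_imp_le)

lemma M1:
  assumes "d \<in> maximal_divisors x n" "n > 0" "prime q" "q dvd n div d"
  shows "x < real (d * q)"
proof (rule ccontr)
  assume c: "\<not> x < real (d * q)"
  have d: "d > 0" "d dvd n" using assms(1) unfolding maximal_divisors_def divisors_set_def by auto
  have "d * q dvd n" using assms(4) d by (metis dvd_div_iff_mult dvd_mult_div_cancel mult_dvd_mono dvd_refl
        div_mult_self1_is_m dvd_trans)
  moreover have "d * q > 0" using d assms(3) prime_gt_0_nat by auto
  moreover have "d * q \<noteq> d" using d assms(3) prime_gt_1_nat by auto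
  ultimately have "d * q \<in> divisors_set n" "d dvd d * q" unfolding divisors_set_def by auto
  then show False using assms(1) c \<open>d * q \<noteq> d\<close> unfolding maximal_divisors_def by fastforce
qed

lemma M2:
  assumes "t \<in> divisors_set N" "real t \<le> x" "\<And>p. prime p \<Longrightarrow> p dvd N div t \<Longrightarrow> x < real (t * p)"
  shows "t \<in> maximal_divisors x N"
proof -
  have t0: "t > 0" "t dvd N" using assms(1) unfolding divisors_set_def by auto
  have no: "False" if d': "d' \<in> divisors_set N" "d' \<noteq> t" "real d' \<le> x" "t dvd d'" for d'
  proof -
    obtain c where c: "d' = t * c" using d'(4) by (rule dvdE)
    have "c \<noteq> 1" using c d'(2) by auto
    then obtain p where p: "prime p" "p dvd c" using prime_factor_nat by blast
    have dN: "d' dvd N" "d' > 0" using d'(1) unfolding divisors_set_def by auto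
    have "c > 0" using c dN(2) by (cases "c = 0") auto
    have "t * c dvd N" using c dN by simp
    then obtain e where e: "N = t * c * e" by (rule dvdE)
    then have "N div t = c * e" using t0 by (simp add: mult.assoc)
    then have "c dvd N div t" by simp
    then have "p dvd N div t" using p(2) dvd_trans by blast
    then have "x < real (t * p)" using assms(3) p(1) by blast
    moreover have "p \<le> c" using p(2) \<open>c > 0\<close> by (rule dvd_imp_le)
    then have "t * p \<le> d'" using c by simp
    then have "real (t * p) \<le> real d'" by (rule of_nat_mono)
    ultimately show False using d'(3) by linarith
  qed
  show ?thesis using assms(1,2) no unfolding maximal_divisors_def by blast
qed

lemma image_max:
  assumes red: "reducing m n f" and m: "m > 0" and n: "n > 0" and nN: "n \<le> 2^A * m"
    and d: "d \<in> maximal_divisors x n"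
    and S: "S = {t \<in> divisors_set (2^A * m). (\<exists>j. t = 2^j * f d) \<and> real t \<le> x}"
  shows "Max S \<in> maximal_divisors x (2^A * m) \<and> (\<exists>j. Max S = 2^j * f d)"
proof -
  define N where "N = 2^A * m"
  have N0: "N > 0" using m N_def by auto
  have dd: "d \<in> divisors_set n" "real d \<le> x" using d unfolding maximal_divisors_def by auto
  have d0: "d > 0" "d dvd n" using dd unfolding divisors_set_def by auto
  have fd: "f d \<in> divisors_set m" "f d \<le> d" using red dd unfolding reducing_def by auto
  have fd0: "f d > 0" "f d dvd m" using fd unfolding divisors_set_def by auto
  have fdN: "f d dvd N" using fd0 N_def by auto
  have "f d \<in> S" using S fdN fd0 fd dd N_def unfolding divisors_set_def
    by (auto intro!: exI[of _ 0] order_trans[of _ "real d"])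
  have finS: "finite S" using S finite_divs[OF N0] N_def by auto
  define t where "t = Max S"
  have tS: "t \<in> S" using finS \<open>f d \<in> S\<close> t_def Max_in by auto
  then obtain j where tj: "t = 2^j * f d" using S by auto
  have tN: "t \<in> divisors_set N" "real t \<le> x" using tS S N_def by auto
  have t0: "t > 0" "t dvd N" using tN unfolding divisors_set_def by auto
  have key: "x < real (t * p)" if p: "prime p" "p dvd N div t" for p
  proof (cases "even (N div t)")
    case True
    obtain r where r: "N div t = 2 * r" using True by (auto elim: evenE)
    have "N = t * (N div t)" using t0 by simp
    then have "N = (2 * t) * r" using r by simp
    then have "2 * t dvd N" by (metis dvd_triv_left)
    then have "2 * t \<in> divisors_set N" using t0 unfolding divisors_set_def by auto
    moreover have "2 * t = 2^(Suc j) * f d" using tj by simp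
    ultimately have "real (2 * t) \<le> x \<Longrightarrow> 2 * t \<in> S" using S N_def by blast
    moreover have "2 * t \<in> S \<Longrightarrow> 2 * t \<le> t" using finS t_def by auto
    ultimately have "\<not> real (2 * t) \<le> x" using t0 by linarith
    then have "x < real (2 * t)" by simp
    moreover have "2 * t \<le> t * p" using p prime_ge_2_nat by (simp add: mult.commute)
    ultimately show ?thesis by (meson le_less_trans not_le of_nat_le_iff)
  next
    case False
    define k where "k = m div f d"
    define q where "q = N div t"
    have mk: "m = f d * k" using fd0 k_def by simp
    have Nq: "N = t * q" using t0 q_def by simp
    have eq: "2^A * k = 2^j * q"
    proof -
      have "f d * (2^A * k) = f d * (2^j * q)" using Nq mk tj N_def by (simp add: ac_simps)
      then show ?thesis using fd0 by simp
    qed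
    have Aj: "A \<le> j"
    proof (rule ccontr)
      assume "\<not> A \<le> j"
      then have "2^A = (2::nat)^j * 2^(A - j)" by (simp flip: power_add)
      then have "2^(A-j) * k = q" using eq by simp
      moreover have "A - j > 0" using \<open>\<not> A \<le> j\<close> by simp
      moreover have "even ((2::nat)^(A-j))" using \<open>A - j > 0\<close> by simp
      ultimately have "even q" by (metis dvd_mult2)
      then show False using False q_def by simp
    qed
    have podd: "p \<noteq> 2" using False p q_def by auto
    have "q dvd 2^A * k" using eq by simp
    then have "p dvd 2^A * k" using p q_def dvd_trans by blast
    moreover have "coprime p 2" using podd p two_is_prime_nat primes_coprime by blast
    then have "coprime p (2^A)" by simp
    ultimately have pk: "p dvd k" using coprime_dvd_mult_right_iff by blast
    have k0: "k > 0" using mk m by auto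
    have "k \<noteq> 1" using pk p by auto
    have lk: "least_prime_factor k \<le> p" using lpf_le[OF p(1) pk k0] .
    define r where "r = n div d"
    have nr: "n = d * r" using d0 r_def by simp
    have r0: "r > 0" using nr n by auto
    have b: "real k / real r \<le> min 1 (real (least_prime_factor k) / real (least_prime_factor r))"
      using red dd unfolding reducing_def k_def r_def by auto
    have "real k \<le> real r" using b r0 by (simp add: divide_le_eq_1)
    then have "r \<ge> 2" using \<open>k \<noteq> 1\<close> k0 by linarith
    from lpf_prime[OF this] have lr: "prime (least_prime_factor r)" "least_prime_factor r dvd r" by auto
    have xlt: "x < real (d * least_prime_factor r)" using M1[OF d n lr(1)] lr(2) r_def by simp
    have lr1: "least_prime_factor r \<ge> 1" "least_prime_factor k \<ge> 1" using lpf_pos by auto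
    have "real k / real r \<le> real (least_prime_factor k) / real (least_prime_factor r)" using b by simp
    then have "real k * real (least_prime_factor r) \<le> real (least_prime_factor k) * real r"
      using r0 lr1 by (simp add: divide_simps)
    then have i1: "k * least_prime_factor r \<le> least_prime_factor k * r" by (simp flip: of_nat_mult)
    have "(d * least_prime_factor r) * k \<le> least_prime_factor k * n" 
      using mult_le_mono2[OF i1, of d] nr by (simp add: ac_simps)
    also have "\<dots> \<le> least_prime_factor k * (2^A * m)" using nN by simp
    also have "\<dots> = (least_prime_factor k * 2^A * f d) * k" using mk by (simp add: ac_simps)
    finally have "d * least_prime_factor r \<le> least_prime_factor k * 2^A * f d" using k0 by simp
    also have "\<dots> \<le> p * 2^j * f d" using lk Aj
      by (intro mult_le_mono1 mult_le_mono) (auto intro: power_increasing)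
    also have "\<dots> = t * p" using tj by simp
    finally show ?thesis using xlt by (meson less_le_trans of_nat_le_iff)
  qed
  have "t \<in> maximal_divisors x N" using M2[OF tN key] by blast
  moreover have "\<exists>j. t = 2^j * f d" using tj by blast
  ultimately show ?thesis using t_def N_def by simp
qed

lemma inj_lemma:
  assumes red: "reducing m n f"
    and d: "d \<in> maximal_divisors x n" and d': "d' \<in> maximal_divisors x n"
    and eq: "(2::nat)^j * f d = 2^j' * f d'"
  shows "d = d'"
proof -
  have dd: "d \<in> divisors_set n" "d' \<in> divisors_set n" using d d' unfolding maximal_divisors_def by auto
  have "real (f d) = 2 powi (int j' - int j) * real (f d')"
  proof -
    have "(2::real)^j * real (f d) = 2^j' * real (f d')" using arg_cong[OF eq, of real] by simp
    then show ?thesis by (simp add: power_int_diff field_simps)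
  qed
  then obtain i :: int where i: "real d = 2 powi i * real d'"
    using red dd unfolding reducing_def by blast
  have gen: "u = v" if u: "u \<in> maximal_divisors x n" and v: "v \<in> maximal_divisors x n"
     and e: "u = 2^l * v" for u v l
  proof -
    have "v dvd u" using e by simp
    moreover have "u \<in> divisors_set n" "real u \<le> x" using u unfolding maximal_divisors_def by auto
    ultimately show ?thesis using v unfolding maximal_divisors_def by blast
  qed
  show ?thesis
  proof (cases "i \<ge> 0")
    case True
    have "(2::real) powi i = 2 ^ nat i" using True by (metis nat_0_le power_int_of_nat)
    then have "real d = real (2^nat i * d')" using i by simp
    then have "d = 2^nat i * d'" using of_nat_eq_iff by blast
    then show ?thesis using gen[OF d d'] by blast
  next
    case False
    have "real d' = 2 powi (-i) * real d" using i by (simp add: power_int_minus field_simps)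
    also have "\<dots> = real (2^nat (-i) * d)"
    proof -
      have "(2::real) powi (-i) = 2 ^ nat (-i)" using False by (metis nat_0_le neg_0_le_iff_le nle_le power_int_of_nat)
      then show ?thesis by simp
    qed
    finally have "d' = 2^nat (-i) * d" using of_nat_eq_iff by blast
    then have "d' = d" using gen[OF d' d] by blast
    then show ?thesis by simp
  qed
qed


theorem theorem3p5:
  fixes m n :: nat and a :: int
  assumes "0 < m" and "0 < n"
    and "reduces_to n m"
    and "2 powi a * real m \<ge> real n"
    and "\<forall>b::int. 2 powi b * real m \<ge> real n \<longrightarrow> a \<le> b"
  shows "\<forall>x::real. card (maximal_divisors x n) \<le> card (maximal_divisors x (2 ^ nat a * m))"
proof
  fix x :: real
  obtain f where red: "reducing m n f" using assms(3) unfolding reduces_to_def by blast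
  have nn: "n \<in> divisors_set n" using assms(2) unfolding divisors_set_def by auto
  have fn: "f n \<in> divisors_set m" "f n \<le> n"
    "real (m div f n) / real (n div n) \<le> min 1 (real (least_prime_factor (m div f n)) / real (least_prime_factor (n div n)))"
    using red nn unfolding reducing_def by auto
  have fn0: "f n > 0" "f n dvd m" using fn(1) unfolding divisors_set_def by auto
  have "real (m div f n) \<le> 1" using fn(3) assms(2) by simp
  then have "m div f n \<le> 1" by simp
  moreover have "m = f n * (m div f n)" using fn0 by simp
  ultimately have "f n = m" using assms(1) by (metis le_neq_implies_less less_one mult.right_neutral mult_is_0 nat_less_le)
  then have mn: "m \<le> n" using fn(2) by simp
  have a0: "a \<ge> 0"
  proof (rule ccontr)
    assume "\<not> a \<ge> 0"
    define b where "b = nat (-a)"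
    have ab: "a = - int b" "b \<ge> 1" using \<open>\<not> a \<ge> 0\<close> b_def by auto
    have "(2::real) powi a = inverse (2^b)" using ab by (simp add: power_int_minus)
    moreover have "(2::real)^b \<ge> 2" using ab(2)
      by (metis power_increasing power_one_right one_le_numeral)
    then have "inverse ((2::real)^b) \<le> inverse 2" by (rule le_imp_inverse_le) simp
    ultimately have "(2::real) powi a \<le> inverse 2" by simp
    then have "(2::real) powi a \<le> 1/2" by simp
    then have "2 powi a * real m \<le> 1/2 * real m" using assms(1) by (intro mult_right_mono) auto
    moreover have "real m \<le> real n" using mn by (rule of_nat_mono)
    moreover have "real m > 0" using assms(1) by simp
    ultimately show False using assms(4) by linarith
  qed
  define A where "A = nat a"
  have "(2::real) powi a = 2 ^ A" using a0 A_def by (metis nat_0_le power_int_of_nat)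
  then have "real n \<le> real (2^A * m)" using assms(4) by simp
  then have nN: "n \<le> 2^A * m" by (simp only: of_nat_le_iff)
  define S where "S d = {t \<in> divisors_set (2^A * m). (\<exists>j. t = 2^j * f d) \<and> real t \<le> x}" for d
  define g where "g d = Max (S d)" for d
  have gM: "g d \<in> maximal_divisors x (2^A * m) \<and> (\<exists>j. g d = 2^j * f d)"
    if "d \<in> maximal_divisors x n" for d
    using image_max[OF red assms(1,2) nN that S_def[of d]] g_def by simp
  have "inj_on g (maximal_divisors x n)"
  proof (rule inj_onI)
    fix d d' assume d: "d \<in> maximal_divisors x n" and d': "d' \<in> maximal_divisors x n" and e: "g d = g d'"
    obtain j where j: "g d = 2^j * f d" using gM[OF d] by blast
    obtain j' where j': "g d' = 2^j' * f d'" using gM[OF d'] by blast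
    show "d = d'" using inj_lemma[OF red d d', of j j'] j j' e by simp
  qed
  moreover have "g ` maximal_divisors x n \<subseteq> maximal_divisors x (2^A * m)" using gM by blast
  moreover have "finite (maximal_divisors x (2^A * m))"
    using finite_divs[of "2^A * m"] assms(1) unfolding maximal_divisors_def by auto
  ultimately show "card (maximal_divisors x n) \<le> card (maximal_divisors x (2 ^ nat a * m))"
    using card_inj_on_le A_def by metis
qed

end
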